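(* Let $\lambda>-1/2$, $\lambda\neq0$, let $M\ge0$, $a_0,\dots,a_M\in\mathbb{R}$ and $f_M(x)=\sum_{m=0}^M a_mC^{(\lambda)}_m(x)$. For integers $n\ge -1$ and $y\in[-1,1]$ let $\tilde R_n(y)=\int_{-1}^{y}f_M(y-1-t)\,C^{(\lambda)}_n(t)\,\mathrm{d}t$ (so $\tilde R_{-1}\equiv0$). Then $$\tilde R_0(y)=\int_{-1}^{y}f_M(t)\,\mathrm{d}t,$$ and for every integer $n\ge0$ and $y\in[-1,1]$, $$\tilde R_{n+1}(y)=2(n+\lambda)\int_{-1}^{y}\tilde R_n(s)\,\mathrm{d}s+\tilde R_{n-1}(y)+S^{(\lambda)}_n\int_{-1}^{y}f_M(t)\,\mathrm{d}t,$$ where $$S^{(\lambda)}_n=\frac{2(-1)^{n+1}(\lambda+n)(2\lambda-1)_n}{(n+1)!}.$$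
   Context: Gegenbauer polynomials $C^{(\lambda)}_n$ ($\lambda>-1/2$, $\lambda\ne0$) are defined by $C^{(\lambda)}_{-1}=0$, $C^{(\lambda)}_0=1$ and $2(n+\lambda)xC^{(\lambda)}_n(x)=(n+1)C^{(\lambda)}_{n+1}(x)+(n+2\lambda-1)C^{(\lambda)}_{n-1}(x)$ for $n\ge0$; $C^{(\lambda)}_n:=0$ for $n<0$. $(a)_n=a(a+1)\cdots(a+n-1)$ is the Pochhammer symbol, $(a)_0=1$. $\tilde R_n(y)$ is the convolution $\int_{-1}^{x+1}f_M(x-t)C^{(\lambda)}_n(t)\,\mathrm{d}t$ at $x=y-1$. *)

theory Defs
  imports "HOL-Analysis.Analysis"
begin

text \<open>Gegenbauer polynomials via the three-term recurrence, for nonnegative index: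
  C_0 = 1, C_1 = 2 l x (recurrence at n = 0 with C_{-1} = 0), and
  (n+2) C_{n+2} = 2(n+1+l) x C_{n+1} - (n+1+2l-1) C_n.\<close>
fun gegen_nat :: "real \<Rightarrow> nat \<Rightarrow> real \<Rightarrow> real" where
  "gegen_nat l 0 x = 1"
| "gegen_nat l (Suc 0) x = 2 * l * x"
| "gegen_nat l (Suc (Suc n)) x =
     (2 * (real n + 1 + l) * x * gegen_nat l (Suc n) x
       - (real n + 2 * l) * gegen_nat l n x) / (real n + 2)"

definition gegenbauer :: "real \<Rightarrow> int \<Rightarrow> real \<Rightarrow> real" where
  "gegenbauer l n x = (if n < 0 then 0 else gegen_nat l (nat n) x)"

definition fM :: "real \<Rightarrow> nat \<Rightarrow> (nat \<Rightarrow> real) \<Rightarrow> real \<Rightarrow> real" where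
  "fM l M a x = (\<Sum>m\<le>M. a m * gegenbauer l (int m) x)"

definition Rtilde :: "real \<Rightarrow> nat \<Rightarrow> (nat \<Rightarrow> real) \<Rightarrow> int \<Rightarrow> real \<Rightarrow> real" where
  "Rtilde l M a n y = integral {-1..y} (\<lambda>t. fM l M a (y - 1 - t) * gegenbauer l n t)"

definition Scoef :: "real \<Rightarrow> nat \<Rightarrow> real" where
  "Scoef l n = 2 * (-1) ^ (n + 1) * (l + real n) * pochhammer (2 * l - 1) n / fact (n + 1)"

end

theory Submission
  imports Defs "HOL-Computational_Algebra.Polynomial"
begin


fun gp :: "real \<Rightarrow> nat \<Rightarrow> real poly" where
  "gp l 0 = 1"
| "gp l (Suc 0) = [:0, 2*l:]"
| "gp l (Suc (Suc n)) = smult (1/(real n + 2)) (smult (2 * (real n + 1 + l)) ([:0,1:] * gp l (Suc n)) - smult (real n + 2*l) (gp l n))"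

lemma gp_poly: "poly (gp l n) x = gegen_nat l n x"
  by (induction l n rule: gp.induct) (auto simp: field_simps)

fun dg :: "real \<Rightarrow> nat \<Rightarrow> real \<Rightarrow> real" where
  "dg l 0 x = 0"
| "dg l (Suc 0) x = 2*l"
| "dg l (Suc (Suc n)) x = (2 * (real n + 1 + l) * (gegen_nat l (Suc n) x + x * dg l (Suc n) x) - (real n + 2*l) * dg l n x) / (real n + 2)"

lemma dg_deriv: "(gegen_nat l n has_real_derivative dg l n x) (at x)"
proof (induction l n x rule: dg.induct)
  case (3 l n x)
  have e: "gegen_nat l (Suc (Suc n)) = (\<lambda>x. (1 / (real n + 2)) * (2 * (real n + 1 + l) * x * gegen_nat l (Suc n) x
       - (real n + 2 * l) * gegen_nat l n x))" by (simp add: fun_eq_iff)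
  show ?case unfolding e
    by (rule derivative_eq_intros 3 refl)+ (simp add: field_simps)
qed (auto intro!: derivative_eq_intros)

lemma AB: "x * dg l (Suc m) x - dg l m x = real (Suc m) * gegen_nat l (Suc m) x
   \<and> dg l (Suc m) x - x * dg l m x = (real m + 2*l) * gegen_nat l m x"
proof (induction m)
  case 0
  then show ?case by simp
next
  case (Suc m)
  then have A1: "x * dg l (Suc m) x - dg l m x = real (Suc m) * gegen_nat l (Suc m) x"
    and B0: "dg l (Suc m) x - x * dg l m x = (real m + 2*l) * gegen_nat l m x" by auto
  have C2: "(real m + 2) * gegen_nat l (Suc (Suc m)) x = 2 * (real m + 1 + l) * x * gegen_nat l (Suc m) x
       - (real m + 2 * l) * gegen_nat l m x" by (simp add: field_simps)
  have D2: "(real m + 2) * dg l (Suc (Suc m)) x = 2 * (real m + 1 + l) * (gegen_nat l (Suc m) x + x * dg l (Suc m) x) - (real m + 2*l) * dg l m x"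
    by (simp add: field_simps)
  have B1: "dg l (Suc (Suc m)) x - x * dg l (Suc m) x = (real (Suc m) + 2*l) * gegen_nat l (Suc m) x"
  proof -
    have "(real m + 2) * (dg l (Suc (Suc m)) x - x * dg l (Suc m) x) = (real m + 2) * ((real (Suc m) + 2*l) * gegen_nat l (Suc m) x)"
      using A1 D2 unfolding of_nat_Suc by algebra
    then show ?thesis by simp
  qed
  have A2: "x * dg l (Suc (Suc m)) x - dg l (Suc m) x = real (Suc (Suc m)) * gegen_nat l (Suc (Suc m)) x"
    using A1 B0 B1 C2 unfolding of_nat_Suc by algebra
  show ?case using A2 B1 by simp
qed

lemma Dn: "dg l (Suc n) x - (if n = 0 then 0 else dg l (n - 1) x) = 2 * (real n + l) * gegen_nat l n x"
proof (cases n)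
  case 0 then show ?thesis by simp
next
  case (Suc m)
  have A1: "x * dg l (Suc m) x - dg l m x = real (Suc m) * gegen_nat l (Suc m) x"
    and B1: "dg l (Suc (Suc m)) x - x * dg l (Suc m) x = (real (Suc m) + 2*l) * gegen_nat l (Suc m) x"
    using AB[of x l m] AB[of x l "Suc m"] by auto
  have "dg l (Suc (Suc m)) x - dg l m x = 2*(real (Suc m)+l)*gegen_nat l (Suc m) x"
    using A1 B1 unfolding of_nat_Suc by algebra
  then show ?thesis using Suc by simp
qed

lemma alg1:
  fixes n F P s l :: real
  assumes "F \<noteq> 0" "n \<ge> 0"
  shows "(2*(n+1+l)*(-1)*((-s)*(P*(2*l+n))/((n+1)*F)) - (n+2*l)*(s*P/F))/(n+2)
     = s*(P*(2*l+n)*(2*l+n+1))/((n+2)*((n+1)*F))"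
proof -
  obtain a b where ab: "a = n+1" "b = n+2" by blast
  have nz: "a \<noteq> 0" "b \<noteq> 0" using assms ab by auto
  have X: "(2*(a+l)*(-1)*((-s)*(P*(2*l+n))/(a*F)) - (n+2*l)*(s*P/F))/b
     = s*(P*(2*l+n)*(2*l+n+1))/(b*(a*F))" using nz assms(1) apply (simp add: field_simps) using ab by algebra
  show ?thesis using X unfolding ab .
qed

lemma poch2: "pochhammer (2*l) (Suc n) = pochhammer (2*l) n * (2*l + real n)"
  "pochhammer (2*l) (Suc (Suc n)) = pochhammer (2*l) n * (2*l + real n) * (2*l + real n + 1)"
  by (simp_all add: pochhammer_Suc algebra_simps)

lemma val_m1: "gegen_nat l n (-1) = (-1)^n * pochhammer (2*l) n / fact n"
proof (induction l n "-1::real" rule: gegen_nat.induct)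
  case (3 l n)
  have f1: "(fact (Suc n) :: real) = (real n + 1) * fact n" by (simp add: fact_Suc algebra_simps)
  have f2: "(fact (Suc (Suc n)) :: real) = (real n + 2) * ((real n + 1) * fact n)" by (simp add: fact_Suc algebra_simps)
  have "gegen_nat l (Suc (Suc n)) (-1) = (2*(real n+1+l)*(-1)*((-((-1)^n))*(pochhammer (2*l) n*(2*l+real n))/((real n+1)*fact n))
     - (real n+2*l)*((-1)^n*pochhammer (2*l) n/fact n))/(real n+2)"
    using 3 by (simp add: poch2 f1)
  also have "\<dots> = (-1)^n*(pochhammer (2*l) n*(2*l+real n)*(2*l+real n+1))/((real n+2)*((real n+1)*fact n))"
    by (rule alg1) auto
  finally show ?case using poch2 f2 by (simp add: algebra_simps)
qed auto

lemma alg2: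
  fixes n F P s l :: real
  assumes "F \<noteq> 0" "n \<ge> 0"
  shows "s*(P*(2*l+n)*(2*l+n+1))/((n+2)*((n+1)*F)) - s * P / F
     = 2 * s * (l + (n+1)) * ((2*l-1)*P) / ((n+2)*((n+1)*F))"
proof -
  obtain a b where ab: "a = n+1" "b = n+2" by blast
  have nz: "a \<noteq> 0" "b \<noteq> 0" using assms ab by auto
  have X: "s*(P*(2*l+n)*(2*l+n+1))/(b*(a*F)) - s * P / F
     = 2 * s * (l + a) * ((2*l-1)*P) / (b*(a*F))" using nz assms(1) apply (simp add: field_simps) using ab by algebra
  show ?thesis using X unfolding ab .
qed

lemma Sval: "gegen_nat l (Suc n) (-1) - (if n = 0 then 0 else gegen_nat l (n - 1) (-1)) = Scoef l n"
proof (cases n)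
  case 0 then show ?thesis by (simp add: Scoef_def)
next
  case (Suc m)
  have f2: "(fact (Suc (Suc m)) :: real) = (real m + 2) * ((real m + 1) * fact m)" by (simp add: fact_Suc algebra_simps)
  have p1: "pochhammer (2*l-1) (Suc m) = (2*l-1) * pochhammer (2*l) m"
    by (simp add: pochhammer_rec)
  have "gegen_nat l (Suc n) (-1) - (if n = 0 then 0 else gegen_nat l (n - 1) (-1))
     = (-1)^m*(pochhammer (2*l) m*(2*l+real m)*(2*l+real m+1))/((real m+2)*((real m+1)*fact m)) - (-1)^m * pochhammer (2*l) m / fact m"
    unfolding val_m1 Suc by (simp only: poch2 f2 power_Suc) simp
  also have "\<dots> = 2 * (-1)^m * (l + (real m+1)) * ((2*l-1)*pochhammer (2*l) m) / ((real m+2)*((real m+1)*fact m))"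
    by (rule alg2) auto
  also have "\<dots> = Scoef l n" unfolding Scoef_def Suc p1 f2 by (simp add: algebra_simps)
  finally show ?thesis .
qed



lemma leib_gen:
  fixes k :: "real \<Rightarrow> real \<Rightarrow> real"
  assumes fin: "finite I"
    and sep: "\<And>y t. k y t = (\<Sum>i\<in>I. \<alpha> i y * \<beta> i t)"
    and da: "\<And>i y. (\<alpha> i has_real_derivative \<alpha>' i y) (at y)"
    and cb: "\<And>i. continuous_on UNIV (\<beta> i)"
    and dk: "\<And>y t. ((\<lambda>y. k y t) has_real_derivative ky y t) (at y)"
    and s: "s \<in> {-1..b}"
  shows "((\<lambda>y. integral {-1..y} (k y)) has_real_derivative (k s s + integral {-1..s} (ky s))) (at s within {-1..b})"
proof -
  have ky: "ky s t = (\<Sum>i\<in>I. \<alpha>' i s * \<beta> i t)" for t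
  proof (rule DERIV_unique[OF dk])
    show "((\<lambda>y. k y t) has_real_derivative (\<Sum>i\<in>I. \<alpha>' i s * \<beta> i t)) (at s)"
      unfolding sep by (auto intro!: derivative_eq_intros da)
  qed
  have intb: "\<beta> i integrable_on {-1..y}" for i y
    by (rule integrable_continuous_interval) (rule continuous_on_subset[OF cb], auto)
  have eq: "integral {-1..y} (k y) = (\<Sum>i\<in>I. \<alpha> i y * integral {-1..y} (\<beta> i))" for y
  proof -
    have "integral {-1..y} (k y) = integral {-1..y} (\<lambda>t. \<Sum>i\<in>I. \<alpha> i y * \<beta> i t)"
      unfolding sep ..
    also have "\<dots> = (\<Sum>i\<in>I. integral {-1..y} (\<lambda>t. \<alpha> i y * \<beta> i t))"
      by (rule integral_sum[OF fin]) (auto intro: integrable_on_mult_right intb)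
    also have "\<dots> = (\<Sum>i\<in>I. \<alpha> i y * integral {-1..y} (\<beta> i))"
      by simp
    finally show ?thesis .
  qed
  have "((\<lambda>y. \<Sum>i\<in>I. \<alpha> i y * integral {-1..y} (\<beta> i)) has_real_derivative
      (\<Sum>i\<in>I. \<alpha>' i s * integral {-1..s} (\<beta> i) + \<alpha> i s * \<beta> i s)) (at s within {-1..b})"
    apply (rule DERIV_sum)
    apply (rule derivative_eq_intros)
      apply (rule DERIV_subset[OF da], simp)
     apply (rule integral_has_real_derivative)
      apply (rule continuous_on_subset[OF cb], simp)
     apply (rule s)
    apply simp
    done
  moreover have "(\<Sum>i\<in>I. \<alpha>' i s * integral {-1..s} (\<beta> i) + \<alpha> i s * \<beta> i s) = k s s + integral {-1..s} (ky s)"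
  proof -
    have "integral {-1..s} (ky s) = integral {-1..s} (\<lambda>t. \<Sum>i\<in>I. \<alpha>' i s * \<beta> i t)"
      unfolding ky ..
    also have "\<dots> = (\<Sum>i\<in>I. integral {-1..s} (\<lambda>t. \<alpha>' i s * \<beta> i t))"
      by (rule integral_sum[OF fin]) (auto intro: integrable_on_mult_right intb)
    also have "\<dots> = (\<Sum>i\<in>I. \<alpha>' i s * integral {-1..s} (\<beta> i))"
      by simp
    finally show ?thesis unfolding sep by (simp add: sum.distrib)
  qed
  ultimately have "((\<lambda>y. \<Sum>i\<in>I. \<alpha> i y * integral {-1..y} (\<beta> i)) has_real_derivative
      (k s s + integral {-1..s} (ky s))) (at s within {-1..b})" by simp
  then show ?thesis
    by (rule has_field_derivative_transform_within[where d=1]) (use s eq in auto)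
qed

lemma sep: fixes P :: "real poly" shows "poly P (y - 1 - t) = (\<Sum>p\<in>Sigma {..degree P} (\<lambda>j. {..j}).
   (coeff P (fst p) * of_nat (fst p choose snd p) * y ^ snd p) * ((-1-t) ^ (fst p - snd p)))"
proof -
  have "poly P (y - 1 - t) = (\<Sum>j\<le>degree P. coeff P j * (y + (-1-t)) ^ j)"
  proof -
    have e: "y - 1 - t = y + (-1-t)" by simp
    show ?thesis by (simp only: poly_altdef e)
  qed
  also have "\<dots> = (\<Sum>j\<le>degree P. \<Sum>i\<le>j. coeff P j * of_nat (j choose i) * y ^ i * (-1-t) ^ (j - i))"
    unfolding binomial_ring by (simp add: sum_distrib_left mult.assoc)
  also have "\<dots> = (\<Sum>p\<in>Sigma {..degree P} (\<lambda>j. {..j}).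
   (coeff P (fst p) * of_nat (fst p choose snd p) * y ^ snd p) * ((-1-t) ^ (fst p - snd p)))"
    by (subst sum.Sigma) (auto simp: case_prod_beta)
  finally show ?thesis .
qed

lemma dpoly: fixes P :: "real poly" shows "((\<lambda>y. poly P (y - 1 - t) * c) has_real_derivative poly (pderiv P) (y - 1 - t) * c) (at y)"
proof -
  have "((\<lambda>y. poly P (y - 1 - t)) has_real_derivative poly (pderiv P) (y - 1 - t) * 1) (at y)"
    by (rule DERIV_chain2[OF poly_DERIV]) (auto intro!: derivative_eq_intros)
  then show ?thesis by (auto intro!: derivative_eq_intros)
qed

lemma leib_poly:
  fixes P :: "real poly"
  assumes h: "continuous_on UNIV h" and s: "s \<in> {-1..b}"
  shows "((\<lambda>y. integral {-1..y} (\<lambda>t. poly P (y-1-t) * h t)) has_real_derivative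
     (poly P (-1) * h s + integral {-1..s} (\<lambda>t. poly (pderiv P) (s-1-t) * h t))) (at s within {-1..b})"
proof -
  let ?I = "Sigma {..degree P} (\<lambda>j. {..j})"
  define \<alpha> where "\<alpha> p y = coeff P (fst p) * of_nat (fst p choose snd p) * y ^ snd p" for p and y :: real
  define \<alpha>' where "\<alpha>' p y = coeff P (fst p) * of_nat (fst p choose snd p) * (of_nat (snd p) * y ^ (snd p - 1))" for p and y :: real
  define \<beta> where "\<beta> p t = (-1-t) ^ (fst p - snd p) * h t" for p and t :: real
  have "((\<lambda>y. integral {-1..y} ((\<lambda>y t. poly P (y-1-t) * h t) y)) has_real_derivative
     ((\<lambda>y t. poly P (y-1-t) * h t) s s + integral {-1..s} ((\<lambda>y t. poly (pderiv P) (y-1-t) * h t) s))) (at s within {-1..b})"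
  proof (rule leib_gen[of ?I _ \<alpha> \<beta> \<alpha>'])
    show "finite ?I" by auto
    show "poly P (y - 1 - t) * h t = (\<Sum>i\<in>?I. \<alpha> i y * \<beta> i t)" for y t
      unfolding sep \<alpha>_def \<beta>_def by (simp add: sum_distrib_right mult.assoc)
    show "(\<alpha> i has_real_derivative \<alpha>' i y) (at y)" for i y
      unfolding \<alpha>_def[abs_def] \<alpha>'_def by (auto intro!: derivative_eq_intros)
    show "continuous_on UNIV (\<beta> i)" for i
      unfolding \<beta>_def[abs_def] by (auto intro!: continuous_intros h)
    show "((\<lambda>y. poly P (y - 1 - t) * h t) has_real_derivative poly (pderiv P) (y - 1 - t) * h t) (at y)" for y t
      by (rule dpoly)
  qed (use s in auto)
  then show ?thesis by simp
qed

lemma ibp: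
  fixes P :: "real poly"
  assumes dPhi: "\<And>t. (\<Phi> has_real_derivative q t) (at t)"
    and q: "continuous_on UNIV q" and z: "\<Phi> (-1) = 0" and s: "s \<ge> -1"
  shows "integral {-1..s} (\<lambda>t. poly P (s-1-t) * q t)
     = poly P (-1) * \<Phi> s + integral {-1..s} (\<lambda>t. poly (pderiv P) (s-1-t) * \<Phi> t)"
proof -
  have cPhi: "continuous_on UNIV \<Phi>"
    by (rule continuous_at_imp_continuous_on) (use DERIV_isCont[OF dPhi] in auto)
  have dP: "((\<lambda>t. poly P (s - 1 - t)) has_real_derivative poly (pderiv P) (s - 1 - t) * (-1)) (at t)" for t
    by (rule DERIV_chain2[OF poly_DERIV]) (auto intro!: derivative_eq_intros)
  have "((\<lambda>t. poly P (s-1-t) * q t - poly (pderiv P) (s-1-t) * \<Phi> t) has_integral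
       (poly P (s-1-s) * \<Phi> s - poly P (s-1-(-1)) * \<Phi> (-1))) {-1..s}"
  proof (rule fundamental_theorem_of_calculus)
    show "-1 \<le> s" by (rule s)
    fix x assume "x \<in> {-1..s}"
    have "((\<lambda>t. poly P (s-1-t) * \<Phi> t) has_real_derivative
        (poly (pderiv P) (s - 1 - x) * (-1)) * \<Phi> x + poly P (s-1-x) * q x) (at x)"
      by (rule DERIV_cong[OF DERIV_mult[OF dP dPhi]]) (simp add: algebra_simps)
    then have "((\<lambda>t. poly P (s-1-t) * \<Phi> t) has_real_derivative
        (poly P (s-1-x) * q x - poly (pderiv P) (s-1-x) * \<Phi> x)) (at x within {-1..s})"
      by (rule DERIV_subset[THEN DERIV_cong]) (auto simp: algebra_simps)
    then show "((\<lambda>t. poly P (s-1-t) * \<Phi> t) has_vector_derivative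
        (poly P (s-1-x) * q x - poly (pderiv P) (s-1-x) * \<Phi> x)) (at x within {-1..s})"
      by (simp add: has_real_derivative_iff_has_vector_derivative)
  qed
  then have "integral {-1..s} (\<lambda>t. poly P (s-1-t) * q t - poly (pderiv P) (s-1-t) * \<Phi> t)
      = poly P (-1) * \<Phi> s" using z by (simp add: integral_unique)
  moreover have "integral {-1..s} (\<lambda>t. poly P (s-1-t) * q t - poly (pderiv P) (s-1-t) * \<Phi> t)
      = integral {-1..s} (\<lambda>t. poly P (s-1-t) * q t) - integral {-1..s} (\<lambda>t. poly (pderiv P) (s-1-t) * \<Phi> t)"
    by (rule integral_diff; rule integrable_continuous_interval; rule continuous_on_subset[of UNIV];
        auto intro!: continuous_intros q cPhi)
  ultimately show ?thesis by simp
qed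

lemma Kp:
  fixes P :: "real poly"
  assumes dPhi: "\<And>t. (\<Phi> has_real_derivative q t) (at t)"
    and q: "continuous_on UNIV q" and z: "\<Phi> (-1) = 0" and y: "y \<ge> -1"
  shows "integral {-1..y} (\<lambda>s. integral {-1..s} (\<lambda>t. poly P (s-1-t) * q t))
     = integral {-1..y} (\<lambda>t. poly P (y-1-t) * \<Phi> t)"
proof -
  have cPhi: "continuous_on UNIV \<Phi>"
    by (rule continuous_at_imp_continuous_on) (use DERIV_isCont[OF dPhi] in auto)
  have "((\<lambda>s. integral {-1..s} (\<lambda>t. poly P (s-1-t) * q t)) has_integral
     (integral {-1..y} (\<lambda>t. poly P (y-1-t) * \<Phi> t) - integral {-1..-1} (\<lambda>t. poly P (-1-1-t) * \<Phi> t))) {-1..y}"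
  proof (rule fundamental_theorem_of_calculus)
    show "-1 \<le> y" by (rule y)
    fix x assume x: "x \<in> {-1..y}"
    have "((\<lambda>y. integral {-1..y} (\<lambda>t. poly P (y-1-t) * \<Phi> t)) has_real_derivative
       (poly P (-1) * \<Phi> x + integral {-1..x} (\<lambda>t. poly (pderiv P) (x-1-t) * \<Phi> t))) (at x within {-1..y})"
      by (rule leib_poly[OF cPhi x])
    also have "poly P (-1) * \<Phi> x + integral {-1..x} (\<lambda>t. poly (pderiv P) (x-1-t) * \<Phi> t)
        = integral {-1..x} (\<lambda>t. poly P (x-1-t) * q t)"
      using ibp[OF dPhi q z, of x P] x by simp
    finally show "((\<lambda>y. integral {-1..y} (\<lambda>t. poly P (y-1-t) * \<Phi> t)) has_vector_derivative
       integral {-1..x} (\<lambda>t. poly P (x-1-t) * q t)) (at x within {-1..y})"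
      by (simp add: has_real_derivative_iff_has_vector_derivative)
  qed
  then show ?thesis by (simp add: integral_unique)
qed



lemma subst_refl:
  fixes g :: "real \<Rightarrow> real"
  assumes g: "continuous_on UNIV g" and y: "y \<ge> -1"
  shows "integral {-1..y} (\<lambda>t. g (y-1-t)) = integral {-1..y} g"
proof -
  have "(g has_integral integral {-1..y} g) (cbox (-1) y)"
  proof -
    have "continuous_on {-1..y} g" using continuous_on_subset[OF g] by blast
    then have "g integrable_on {-1..y}" by (rule integrable_continuous_interval)
    then show ?thesis by (simp add: integrable_integral)
  qed
  from has_integral_affinity[OF this, of "-1" "y-1"]
  have "((\<lambda>x. g (- x + (y - 1))) has_integral integral {-1..y} g)
         ((\<lambda>x. - x + (y - 1)) ` cbox (- 1) y)" by simp
  moreover have "(\<lambda>x. - x + (y - 1)) ` cbox (- 1) y = {-1..y}"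
  proof
    show "(\<lambda>x. - x + (y - 1)) ` cbox (- 1) y \<subseteq> {-1..y}" by auto
    show "{-1..y} \<subseteq> (\<lambda>x. - x + (y - 1)) ` cbox (- 1) y"
    proof
      fix x assume "x \<in> {-1..y}"
      then show "x \<in> (\<lambda>x. - x + (y - 1)) ` cbox (- 1) y"
        by (intro image_eqI[of _ _ "y - 1 - x"]) auto
    qed
  qed
  ultimately have "((\<lambda>t. g (y-1-t)) has_integral integral {-1..y} g) {-1..y}"
    by (simp add: algebra_simps)
  then show ?thesis by (rule integral_unique)
qed

definition FP :: "real \<Rightarrow> nat \<Rightarrow> (nat \<Rightarrow> real) \<Rightarrow> real poly" where
  "FP l M a = (\<Sum>m\<le>M. smult (a m) (gp l m))"

lemma fM_poly: "fM l M a = poly (FP l M a)"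
  by (simp add: fun_eq_iff fM_def FP_def poly_sum gp_poly gegenbauer_def)

lemma geg_cont: "continuous_on UNIV (gegen_nat l n)"
  by (rule continuous_at_imp_continuous_on) (use DERIV_isCont[OF dg_deriv] in auto)

lemma part1:
  assumes y: "y \<ge> -1"
  shows "Rtilde l M a 0 y = integral {-1..y} (\<lambda>t. fM l M a t)"
proof -
  have "Rtilde l M a 0 y = integral {-1..y} (\<lambda>t. poly (FP l M a) (y - 1 - t))"
    by (simp add: Rtilde_def gegenbauer_def fM_poly)
  also have "\<dots> = integral {-1..y} (poly (FP l M a))"
    by (rule subst_refl[OF _ y]) (auto intro: continuous_intros)
  finally show ?thesis by (simp add: fM_poly)
qed

lemma part2:
  assumes l: "l > -1/2" "l \<noteq> 0" and y: "y \<ge> -1"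
  shows "Rtilde l M a (int n + 1) y =
           2 * (real n + l) * integral {-1..y} (\<lambda>s. Rtilde l M a (int n) s)
           + Rtilde l M a (int n - 1) y
           + Scoef l n * integral {-1..y} (\<lambda>t. fM l M a t)"
proof -
  define P where "P = FP l M a"
  define Cm where "Cm t = (if n = 0 then 0 else gegen_nat l (n - 1) t)" for t
  define dCm where "dCm t = (if n = 0 then 0 else dg l (n - 1) t)" for t
  define c where "c = 2 * (real n + l)"
  have c: "c \<noteq> 0"
  proof (cases n)
    case 0 then show ?thesis using l by (simp add: c_def)
  next
    case (Suc m) then show ?thesis using l by (simp add: c_def)
  qed
  define \<Phi> where "\<Phi> t = (gegen_nat l (Suc n) t - Cm t - Scoef l n) / c" for t
  have dCm: "(Cm has_real_derivative dCm t) (at t)" for t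
    unfolding Cm_def[abs_def] dCm_def by (cases "n = 0") (auto intro: dg_deriv)
  have dPhi: "(\<Phi> has_real_derivative gegen_nat l n t) (at t)" for t
  proof -
    have "(\<Phi> has_real_derivative (dg l (Suc n) t - dCm t - 0) / c) (at t)"
      unfolding \<Phi>_def[abs_def] using c
      by (auto intro!: derivative_eq_intros dg_deriv dCm simp: field_simps)
    also have "(dg l (Suc n) t - dCm t - 0) / c = gegen_nat l n t"
      using Dn[of l n t] c by (simp add: dCm_def c_def)
    finally show ?thesis .
  qed
  have z: "\<Phi> (-1) = 0" using Sval[of l n] by (simp add: \<Phi>_def Cm_def)
  have cCm: "continuous_on UNIV Cm" unfolding Cm_def[abs_def] by (cases "n = 0") (auto intro: geg_cont)
  have cPhi: "continuous_on UNIV \<Phi>"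
    by (rule continuous_at_imp_continuous_on) (use DERIV_isCont[OF dPhi] in auto)
  have gm: "gegenbauer l (int n - 1) = Cm"
    by (auto simp: fun_eq_iff gegenbauer_def Cm_def nat_diff_distrib)
  have gp1: "gegenbauer l (int n + 1) t = Cm t + Scoef l n + c * \<Phi> t" for t
    using c by (simp add: gegenbauer_def \<Phi>_def nat_add_distrib)
  have g0: "gegenbauer l (int n) = gegen_nat l n" by (simp add: fun_eq_iff gegenbauer_def)
  have int: "(\<lambda>t. poly P (y - 1 - t) * h t) integrable_on {-1..y}" if "continuous_on UNIV h" for h
    by (rule integrable_continuous_interval, rule continuous_on_subset[of UNIV])
       (auto intro!: continuous_intros that)
  have "Rtilde l M a (int n + 1) y = integral {-1..y} (\<lambda>t. poly P (y - 1 - t) * Cm t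
      + Scoef l n * poly P (y - 1 - t) + c * (poly P (y - 1 - t) * \<Phi> t))"
    unfolding Rtilde_def fM_poly P_def[symmetric] gp1 by (simp add: algebra_simps)
  also have "\<dots> = integral {-1..y} (\<lambda>t. poly P (y - 1 - t) * Cm t)
      + Scoef l n * integral {-1..y} (\<lambda>t. poly P (y - 1 - t))
      + c * integral {-1..y} (\<lambda>t. poly P (y - 1 - t) * \<Phi> t)"
  proof -
    have i1: "(\<lambda>t. poly P (y - 1 - t) * Cm t) integrable_on {-1..y}" by (rule int[OF cCm])
    have i2: "(\<lambda>t. Scoef l n * poly P (y - 1 - t)) integrable_on {-1..y}"
      using int[of "\<lambda>_. 1"] by (auto intro: integrable_on_mult_right)
    have i3: "(\<lambda>t. c * (poly P (y - 1 - t) * \<Phi> t)) integrable_on {-1..y}"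
      by (rule integrable_on_mult_right[OF int[OF cPhi]])
    have "integral {-1..y} (\<lambda>t. poly P (y - 1 - t) * Cm t
      + Scoef l n * poly P (y - 1 - t) + c * (poly P (y - 1 - t) * \<Phi> t))
      = integral {-1..y} (\<lambda>t. poly P (y - 1 - t) * Cm t + Scoef l n * poly P (y - 1 - t))
        + integral {-1..y} (\<lambda>t. c * (poly P (y - 1 - t) * \<Phi> t))"
      by (rule integral_add[OF integrable_add[OF i1 i2] i3])
    also have "integral {-1..y} (\<lambda>t. poly P (y - 1 - t) * Cm t + Scoef l n * poly P (y - 1 - t))
       = integral {-1..y} (\<lambda>t. poly P (y - 1 - t) * Cm t) + integral {-1..y} (\<lambda>t. Scoef l n * poly P (y - 1 - t))"
      by (rule integral_add[OF i1 i2])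
    finally show ?thesis by simp
  qed
  also have "integral {-1..y} (\<lambda>t. poly P (y - 1 - t)) = integral {-1..y} (\<lambda>t. fM l M a t)"
    unfolding fM_poly P_def[symmetric] by (rule subst_refl[OF _ y]) (auto intro: continuous_intros)
  also have "integral {-1..y} (\<lambda>t. poly P (y - 1 - t) * \<Phi> t)
      = integral {-1..y} (\<lambda>s. integral {-1..s} (\<lambda>t. poly P (s-1-t) * gegen_nat l n t))"
    by (rule Kp[OF dPhi geg_cont z y, symmetric])
  also have "\<dots> = integral {-1..y} (\<lambda>s. Rtilde l M a (int n) s)"
    unfolding Rtilde_def fM_poly P_def g0 ..
  also have "integral {-1..y} (\<lambda>t. poly P (y - 1 - t) * Cm t) = Rtilde l M a (int n - 1) y"
    unfolding Rtilde_def fM_poly P_def gm ..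
  finally show ?thesis by (simp add: c_def algebra_simps)
qed

theorem theorem4p2:
  fixes l :: real and M :: nat and a :: "nat \<Rightarrow> real"
  assumes "l > -1/2" and "l \<noteq> 0"
  shows "(\<forall>y\<in>{-1..1}. Rtilde l M a 0 y = integral {-1..y} (\<lambda>t. fM l M a t))
    \<and> (\<forall>n::nat. \<forall>y\<in>{-1..1}.
         Rtilde l M a (int n + 1) y =
           2 * (real n + l) * integral {-1..y} (\<lambda>s. Rtilde l M a (int n) s)
           + Rtilde l M a (int n - 1) y
           + Scoef l n * integral {-1..y} (\<lambda>t. fM l M a t))"
  using part1 part2[OF assms] by auto

end
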